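(* Let $f$ be a permutation of $\mathbb{F}_q$, extended to a permutation of $\mathbb{P}^1(\mathbb{F}_q)$ fixing $\infty$, and let $k\ge1$. If $$f=\mu(x)\circ x^{q-2}\circ(x-a_k)\circ x^{q-2}\circ(x-a_{k-1})\circ\cdots\circ x^{q-2}\circ(x-a_1)$$ with $a_1,\dots,a_k\in\mathbb{F}_q$ and $\mu\in\mathbb{F}_q(x)$ of degree one, then $\mu$ is a degree-one polynomial in $\mathbb{F}_q[x]$. Consequently the set of all such representations of $f$ (tuples $(\mu;a_1,\dots,a_k)$ with $\mu\in\mathbb{F}_q[x]$ of degree one) is in bijection with the set of all representations $f=\nu(x)\circ(b_1,\infty)\circ\cdots\circ(b_k,\infty)$ with $b_1,\dots,b_k\in\mathbb{F}_q$ and $\nu\in\mathbb{F}_q(x)$ of degree one.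
   Context: Let $q>2$ be a prime power, $\mathbb{F}_q$ the field with $q$ elements, $\mathbb{P}^1(\mathbb{F}_q)=\mathbb{F}_q\cup\{\infty\}$. Degree-one rational functions in $\mathbb{F}_q(x)$ act on $\mathbb{P}^1(\mathbb{F}_q)$ with the usual conventions. $x^{q-2}$ acts on $\mathbb{P}^1(\mathbb{F}_q)$ by fixing $0$ and $\infty$ and sending $c\in\mathbb{F}_q^*$ to $c^{-1}$. For $b\in\mathbb{F}_q$, $(b,\infty)$ is the transposition of $\mathbb{P}^1(\mathbb{F}_q)$ swapping $b$ and $\infty$. Composition is $(f\circ g)(x)=f(g(x))$, and equalities are of permutations of $\mathbb{P}^1(\mathbb{F}_q)$. *)

theory Defs
  imports "HOL-Computational_Algebra.Polynomial" "HOL-Computational_Algebra.Fraction_Field"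
          "HOL-Combinatorics.Transposition" "HOL-Library.Cardinality"
begin

text \<open>P^1(F_q) is modelled as 'a option, with None playing the role of infinity.
  Rational functions in F_q(x) are elements of the fraction field 'a poly fract.\<close>

definition deg1_ratfuns :: "('a::field) poly fract set" where
  "deg1_ratfuns = {Fract [:b, a:] [:d, c:] | a b c d. a * d - b * c \<noteq> 0}"

definition deg1_polys :: "('a::field) poly fract set" where
  "deg1_polys = {Fract p 1 | p. degree p = 1}"

definition mob_act :: "'a::field \<Rightarrow> 'a \<Rightarrow> 'a \<Rightarrow> 'a \<Rightarrow> 'a option \<Rightarrow> 'a option" where
  "mob_act a b c d p = (case p of
      None \<Rightarrow> (if c = 0 then None else Some (a / c))
    | Some x \<Rightarrow> (if c * x + d = 0 then None else Some ((a * x + b) / (c * x + d))))"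

definition ratfun_act :: "('a::field) poly fract \<Rightarrow> 'a option \<Rightarrow> 'a option" where
  "ratfun_act \<mu> = (SOME g. \<exists>a b c d. a * d - b * c \<noteq> 0 \<and>
       \<mu> = Fract [:b, a:] [:d, c:] \<and> g = mob_act a b c d)"

definition powinv :: "('a::{field,finite}) option \<Rightarrow> 'a option" where
  "powinv p = map_option (\<lambda>c. c ^ (CARD('a) - 2)) p"

definition shift :: "'a::field \<Rightarrow> 'a option \<Rightarrow> 'a option" where
  "shift a p = map_option (\<lambda>c. c - a) p"

text \<open>For as = [a_1,...,a_k]: x^(q-2) o (x - a_k) o ... o x^(q-2) o (x - a_1).\<close>
fun inv_chain :: "('a::{field,finite}) list \<Rightarrow> 'a option \<Rightarrow> 'a option" where
  "inv_chain [] = id"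
| "inv_chain (a # as) = inv_chain as \<circ> (powinv \<circ> shift a)"

text \<open>For bs = [b_1,...,b_k]: (b_1,inf) o ... o (b_k,inf).\<close>
fun transp_chain :: "'a list \<Rightarrow> 'a option \<Rightarrow> 'a option" where
  "transp_chain [] = id"
| "transp_chain (b # bs) = transpose (Some b) None \<circ> transp_chain bs"

definition reps_inv :: "(('a::{field,finite}) \<Rightarrow> 'a) \<Rightarrow> nat \<Rightarrow> ('a poly fract \<times> 'a list) set" where
  "reps_inv f k = {(\<mu>, as). \<mu> \<in> deg1_polys \<and> length as = k \<and>
       map_option f = ratfun_act \<mu> \<circ> inv_chain as}"

definition reps_transp :: "(('a::{field,finite}) \<Rightarrow> 'a) \<Rightarrow> nat \<Rightarrow> ('a poly fract \<times> 'a list) set" where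
  "reps_transp f k = {(\<nu>, bs). \<nu> \<in> deg1_ratfuns \<and> length bs = k \<and>
       map_option f = ratfun_act \<nu> \<circ> transp_chain bs}"

end

theory Submission
  imports Defs
begin


lemma fermat_ff:
  fixes c :: "'a::{field,finite}"
  assumes "c \<noteq> 0"
  shows "c ^ (CARD('a) - 1) = 1"
proof -
  let ?S = "UNIV - {0::'a}"
  have bij: "bij_betw (\<lambda>x. c * x) ?S ?S"
    by (rule bij_betw_byWitness[where f'="\<lambda>x. inverse c * x"]) (use assms in auto)
  have "(\<Prod>x\<in>?S. c * x) = (\<Prod>x\<in>?S. x)"
    using prod.reindex_bij_betw[OF bij, of "\<lambda>x. x"] by simp
  moreover have "(\<Prod>x\<in>?S. c * x) = c ^ card ?S * (\<Prod>x\<in>?S. x)"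
    by (simp add: prod.distrib)
  moreover have "(\<Prod>x\<in>?S. x) \<noteq> 0" by simp
  moreover have "card ?S = CARD('a) - 1"
    by (simp add: card_Diff_singleton)
  ultimately show ?thesis by simp
qed

lemma pow_inv:
  fixes c :: "'a::{field,finite}"
  assumes "CARD('a) > 2"
  shows "c ^ (CARD('a) - 2) = inverse c"
proof (cases "c = 0")
  case True thus ?thesis using assms by simp
next
  case False
  have "CARD('a) - 1 = Suc (CARD('a) - 2)" using assms by simp
  hence "c * c ^ (CARD('a) - 2) = 1" using fermat_ff[OF False] by simp
  thus ?thesis using False by (simp add: field_simps)
qed

lemma powinv_eq: "CARD('a::{field,finite}) > 2 \<Longrightarrow> powinv = map_option (inverse :: 'a \<Rightarrow> 'a)"
  by (simp add: powinv_def pow_inv fun_eq_iff)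



lemma mob_id: "t \<noteq> 0 \<Longrightarrow> mob_act t 0 0 t = id"
  by (auto simp: mob_act_def fun_eq_iff split: option.splits)

lemma mob_comp:
  fixes a b c d a' b' c' d' :: "'a::field"
  assumes "a*d - b*c \<noteq> 0" "a'*d' - b'*c' \<noteq> 0"
  shows "mob_act a b c d \<circ> mob_act a' b' c' d' =
         mob_act (a*a'+b*c') (a*b'+b*d') (c*a'+d*c') (c*b'+d*d')"
proof
  fix p
  show "(mob_act a b c d \<circ> mob_act a' b' c' d') p =
         mob_act (a*a'+b*c') (a*b'+b*d') (c*a'+d*c') (c*b'+d*d') p"
  proof (cases p)
    case None
    show ?thesis
    proof (cases "c' = 0")
      case True
      with assms(2) have "a' \<noteq> 0" by auto
      with True None show ?thesis by (simp add: mob_act_def)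
    next
      case False
      have e: "c*a'+d*c' = c' * (c * (a'/c') + d)" using False by (simp add: field_simps)
      have e2: "a*a'+b*c' = c' * (a * (a'/c') + b)" using False by (simp add: field_simps)
      show ?thesis using False None
        by (simp add: mob_act_def e e2)
    qed
  next
    case (Some x)
    show ?thesis
    proof (cases "c'*x + d' = 0")
      case True
      hence ax: "a'*x+b' \<noteq> 0"
      proof -
        { assume "a'*x+b' = 0"
          hence "a'*d' - b'*c' = 0" using True
            by (smt (verit) add.commute add_diff_cancel_left' diff_zero mult.commute mult.left_commute mult_minus_right right_diff_distrib' neg_eq_iff_add_eq_0)
          with assms(2) have False by simp }
        thus ?thesis by blast
      qed
      have d': "d' = - c'*x" using True by (simp add: eq_neg_iff_add_eq_0 algebra_simps)
      have e: "(c * a' + d * c') * x + (c * b' + d * d') = c * (a'*x+b')"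
        by (simp add: d' algebra_simps)
      have e2: "(a * a' + b * c') * x + (a * b' + b * d') = a * (a'*x+b')"
        by (simp add: d' algebra_simps)
      have "c' \<noteq> 0" using True assms(2) d' by auto
      show ?thesis using True Some ax
        by (simp add: mob_act_def e e2)
    next
      case False
      let ?y = "(a'*x+b')/(c'*x+d')"
      have e: "(c * a' + d * c') * x + (c * b' + d * d') = (c'*x+d') * (c * ?y + d)"
        using False by (simp add: field_simps)
      have e2: "(a * a' + b * c') * x + (a * b' + b * d') = (c'*x+d') * (a * ?y + b)"
        using False by (simp add: field_simps)
      show ?thesis using False Some
        by (simp add: mob_act_def e e2)
    qed
  qed
qed



lemma pprod: "[:b, a:] * [:d, c:] = [:b*d, a*d + b*c, a*c:]"
  by (simp add: algebra_simps)

lemma fract_eq_iff: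
  fixes a b c d a' b' c' d' :: "'a::field"
  assumes "a*d - b*c \<noteq> 0" "a'*d' - b'*c' \<noteq> 0"
  shows "Fract [:b,a:] [:d,c:] = Fract [:b',a':] [:d',c':] \<longleftrightarrow>
     (b*d' = b'*d \<and> a*d' + b*c' = a'*d + b'*c \<and> a*c' = a'*c)"
proof -
  have "[:d,c:] \<noteq> 0" using assms(1) by auto
  moreover have "[:d',c':] \<noteq> 0" using assms(2) by auto
  ultimately have "Fract [:b,a:] [:d,c:] = Fract [:b',a':] [:d',c':] \<longleftrightarrow>
       [:b,a:] * [:d',c':] = [:b',a':] * [:d,c:]" by (simp add: eq_fract)
  also have "\<dots> \<longleftrightarrow> (b*d' = b'*d \<and> a*d' + b*c' = a'*d + b'*c \<and> a*c' = a'*c)"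
    unfolding pprod by (auto simp: algebra_simps)
  finally show ?thesis .
qed

lemma mob_eq_cross:
  fixes a b c d a' b' c' d' :: "'a::field"
  assumes "a*d - b*c \<noteq> 0" "a'*d' - b'*c' \<noteq> 0"
    and e1: "b*d' = b'*d" and e2: "a*d' + b*c' = a'*d + b'*c" and e3: "a*c' = a'*c"
  shows "mob_act a b c d = mob_act a' b' c' d'"
proof
  fix p
  have poly: "(a*x+b)*(c'*x+d') = (a'*x+b')*(c*x+d)" for x
  proof -
    have "(a*x+b)*(c'*x+d') = (a*c')*x*x + (a*d'+b*c')*x + b*d'" by (simp add: algebra_simps)
    also have "\<dots> = (a'*c)*x*x + (a'*d+b'*c)*x + b'*d" using e1 e2 e3 by simp
    also have "\<dots> = (a'*x+b')*(c*x+d)" by (simp add: algebra_simps)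
    finally show ?thesis .
  qed
  have nz: "\<not> (a*x+b = 0 \<and> c*x+d = 0)" for x
  proof
    assume h: "a*x+b = 0 \<and> c*x+d = 0"
    hence "b = -a*x" "d = -c*x" by (simp_all add: eq_neg_iff_add_eq_0 algebra_simps)
    hence "a*d - b*c = 0" by (simp add: algebra_simps)
    with assms(1) show False by simp
  qed
  have nz': "\<not> (a'*x+b' = 0 \<and> c'*x+d' = 0)" for x
  proof
    assume h: "a'*x+b' = 0 \<and> c'*x+d' = 0"
    hence "b' = -a'*x" "d' = -c'*x" by (simp_all add: eq_neg_iff_add_eq_0 algebra_simps)
    hence "a'*d' - b'*c' = 0" by (simp add: algebra_simps)
    with assms(2) show False by simp
  qed
  show "mob_act a b c d p = mob_act a' b' c' d' p"
  proof (cases p)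
    case None
    show ?thesis
    proof (cases "c = 0")
      case True
      with assms(1) have "a \<noteq> 0" by auto
      with True e3 have "c' = 0" by simp
      with True None show ?thesis by (simp add: mob_act_def)
    next
      case False
      have "c' \<noteq> 0"
      proof
        assume "c' = 0"
        with assms(2) have "a' \<noteq> 0" by auto
        with \<open>c' = 0\<close> e3 False show False by simp
      qed
      with False None e3 show ?thesis by (simp add: mob_act_def field_simps)
    qed
  next
    case (Some x)
    have z: "c*x+d = 0 \<longleftrightarrow> c'*x+d' = 0"
      using poly[of x] nz[of x] nz'[of x] by auto
    show ?thesis
    proof (cases "c*x+d = 0")
      case True thus ?thesis using z Some by (simp add: mob_act_def)
    next
      case False
      hence "c'*x+d' \<noteq> 0" using z by simp
      with False Some poly[of x] show ?thesis by (simp add: mob_act_def frac_eq_eq)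
    qed
  qed
qed

lemma ratfun_act_Fract:
  fixes a b c d :: "'a::field"
  assumes "a*d - b*c \<noteq> 0"
  shows "ratfun_act (Fract [:b,a:] [:d,c:]) = mob_act a b c d"
proof -
  have ex: "\<exists>g. \<exists>a' b' c' d'. a' * d' - b' * c' \<noteq> 0 \<and>
       Fract [:b,a:] [:d,c:] = Fract [:b', a':] [:d', c':] \<and> g = mob_act a' b' c' d'"
    using assms by blast
  obtain a' b' c' d' where h: "a' * d' - b' * c' \<noteq> 0"
    "Fract [:b,a:] [:d,c:] = Fract [:b', a':] [:d', c':]" "ratfun_act (Fract [:b,a:] [:d,c:]) = mob_act a' b' c' d'"
    using someI_ex[OF ex] unfolding ratfun_act_def by blast
  have cr: "b'*d = b*d' \<and> a'*d + b'*c = a*d' + b*c' \<and> a'*c = a*c'"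
    using fract_eq_iff[OF h(1) assms] h(2) by simp
  have "mob_act a' b' c' d' = mob_act a b c d"
    by (rule mob_eq_cross[OF h(1) assms]) (use cr in simp_all)
  thus ?thesis using h(3) by simp
qed



lemma two_avoid:
  fixes p :: "'a::finite"
  assumes "CARD('a) > 2"
  obtains x1 x2 where "x1 \<noteq> p" "x2 \<noteq> p" "x1 \<noteq> x2"
proof -
  have "\<not> UNIV \<subseteq> {p}"
  proof
    assume "UNIV \<subseteq> {p}"
    hence "CARD('a) \<le> card {p}" by (intro card_mono) auto
    with assms show False by simp
  qed
  then obtain x1 where x1: "x1 \<noteq> p" by auto
  have "\<not> UNIV \<subseteq> {p, x1}"
  proof
    assume "UNIV \<subseteq> {p, x1}"
    hence "CARD('a) \<le> card {p, x1}" by (intro card_mono) auto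
    also have "\<dots> \<le> 2" by (simp add: card_insert_le_m1)
    finally show False using assms by simp
  qed
  then obtain x2 where "x2 \<notin> {p, x1}" by auto
  thus ?thesis using that x1 by auto
qed

lemma mob_inj:
  fixes a b c d a' b' c' d' :: "'a::{field,finite}"
  assumes card: "CARD('a) > 2"
    and det: "a*d - b*c \<noteq> 0" "a'*d' - b'*c' \<noteq> 0"
    and eq: "mob_act a b c d = mob_act a' b' c' d'"
  shows "Fract [:b,a:] [:d,c:] = Fract [:b',a':] [:d',c':]"
proof -
  have eN: "mob_act a b c d None = mob_act a' b' c' d' None" using eq by simp
  have e3: "a*c' = a'*c"
  proof (cases "c = 0")
    case True
    hence "c' = 0" using eN by (auto simp: mob_act_def split: if_splits)
    with True show ?thesis by simp
  next
    case False
    hence "c' \<noteq> 0" using eN by (auto simp: mob_act_def split: if_splits)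
    with False eN show ?thesis by (auto simp: mob_act_def frac_eq_eq split: if_splits)
  qed
  define \<alpha> where "\<alpha> = a*d' + b*c' - a'*d - b'*c"
  define \<beta> where "\<beta> = b*d' - b'*d"
  have hx: "\<alpha>*x + \<beta> = 0" if "c*x+d \<noteq> 0" for x
  proof -
    have "mob_act a b c d (Some x) = mob_act a' b' c' d' (Some x)" using eq by simp
    with that have nz: "c'*x+d' \<noteq> 0" and v: "(a*x+b)/(c*x+d) = (a'*x+b')/(c'*x+d')"
      by (auto simp: mob_act_def split: if_splits)
    from v that nz have "(a*x+b)*(c'*x+d') = (a'*x+b')*(c*x+d)" by (simp add: frac_eq_eq)
    hence "(a*c')*x*x + (a*d'+b*c')*x + b*d' = (a'*c)*x*x + (a'*d+b'*c)*x + b'*d"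
      by (simp add: algebra_simps)
    hence "(a*d'+b*c')*x + b*d' = (a'*d+b'*c)*x + b'*d" using e3 by simp
    thus ?thesis unfolding \<alpha>_def \<beta>_def by (simp add: algebra_simps)
  qed
  have nzp: "c*x+d \<noteq> 0" if "x \<noteq> -d/c" for x
  proof (cases "c = 0")
    case True
    with det(1) have "d \<noteq> 0" by auto
    with True show ?thesis by simp
  next
    case False
    show ?thesis
    proof
      assume "c*x+d = 0"
      hence "x = -d/c" using False by (simp add: field_simps eq_neg_iff_add_eq_0)
      with that show False by simp
    qed
  qed
  obtain x1 x2 where x: "x1 \<noteq> -d/c" "x2 \<noteq> -d/c" "x1 \<noteq> x2"
    using two_avoid[OF card] by blast
  have h1: "\<alpha>*x1 + \<beta> = 0" and h2: "\<alpha>*x2 + \<beta> = 0" using hx nzp x by auto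
  hence "\<alpha>*x1 = \<alpha>*x2" by (metis add_right_cancel)
  hence "\<alpha>*(x1 - x2) = 0" by (simp add: right_diff_distrib)
  hence a0: "\<alpha> = 0" using x(3) by simp
  hence b0: "\<beta> = 0" using h1 by simp
  show ?thesis
    using fract_eq_iff[OF det(1) det(2)] e3 a0 b0 unfolding \<alpha>_def \<beta>_def
    by (simp add: algebra_simps)
qed



definition ismob :: "('a::field option \<Rightarrow> 'a option) \<Rightarrow> bool" where
  "ismob g \<longleftrightarrow> (\<exists>a b c d. a*d - b*c \<noteq> 0 \<and> g = mob_act a b c d)"

lemma ismob_id: "ismob (id :: 'a::field option \<Rightarrow> _)"
  unfolding ismob_def by (rule exI[of _ 1], rule exI[of _ 0], rule exI[of _ 0], rule exI[of _ 1])
    (simp add: mob_id)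

lemma ismob_comp: assumes "ismob g" "ismob h" shows "ismob (g \<circ> h)"
proof -
  obtain a b c d where g: "a*d - b*c \<noteq> 0" "g = mob_act a b c d" using assms(1) ismob_def by blast
  obtain a' b' c' d' where h: "a'*d' - b'*c' \<noteq> 0" "h = mob_act a' b' c' d'" using assms(2) ismob_def by blast
  have "(a*a'+b*c') * (c*b'+d*d') - (a*b'+b*d') * (c*a'+d*c') = (a*d - b*c) * (a'*d' - b'*c')"
    by (simp add: algebra_simps)
  hence "(a*a'+b*c') * (c*b'+d*d') - (a*b'+b*d') * (c*a'+d*c') \<noteq> 0" using g h by simp
  thus ?thesis unfolding ismob_def g h mob_comp[OF g(1) h(1)] by blast
qed

lemma ismob_inv: assumes "ismob g" shows "\<exists>h. ismob h \<and> h \<circ> g = id \<and> g \<circ> h = id"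
proof -
  obtain a b c d where g: "a*d - b*c \<noteq> 0" "g = mob_act a b c d" using assms ismob_def by blast
  have d2: "d*a - (-b)*(-c) \<noteq> 0" using g(1) by (simp add: algebra_simps)
  have 1: "mob_act d (-b) (-c) a \<circ> mob_act a b c d = id"
    unfolding mob_comp[OF d2 g(1)]
    using mob_id[OF g(1)] by (simp add: algebra_simps)
  have 2: "mob_act a b c d \<circ> mob_act d (-b) (-c) a = id"
    unfolding mob_comp[OF g(1) d2]
    using mob_id[OF g(1)] by (simp add: algebra_simps)
  show ?thesis using 1 2 d2 g(2) unfolding ismob_def by blast
qed

lemma inv_chain_None: "inv_chain as None = None"
  by (induction as) (auto simp: powinv_def shift_def)

definition P :: "'a::field \<Rightarrow> 'a option \<Rightarrow> 'a option" where
  "P a = map_option (\<lambda>x. inverse (x - a))"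

lemma powinv_shift: "CARD('a::{field,finite}) > 2 \<Longrightarrow> powinv \<circ> shift a = P (a::'a)"
  by (simp add: powinv_eq shift_def P_def fun_eq_iff option.map_comp comp_def)

lemma tau_P: "transpose (Some c) None \<circ> P a = P a \<circ> transpose (Some (a + inverse c)) None"
proof
  fix p
  show "(transpose (Some c) None \<circ> P a) p = (P a \<circ> transpose (Some (a + inverse c)) None) p"
  proof (cases p)
    case None thus ?thesis by (simp add: P_def)
  next
    case (Some x)
    have iff: "inverse (x - a) = c \<longleftrightarrow> x = a + inverse c"
      by (metis add_diff_cancel_left' diff_add_cancel inverse_inverse_eq add.commute)
    show ?thesis
    proof (cases "x = a + inverse c")
      case True thus ?thesis using Some by (simp add: P_def)
    next
      case False
      hence "Some (inverse (x - a)) \<noteq> Some c" using iff by simp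
      thus ?thesis using Some False by (simp add: P_def transpose_def)
    qed
  qed
qed

lemma P_mob: "P a = mob_act 0 1 1 (-a) \<circ> transpose (Some a) None"
proof
  fix p
  show "P a p = (mob_act 0 1 1 (-a) \<circ> transpose (Some a) None) p"
    by (cases p) (auto simp: P_def mob_act_def transpose_def divide_inverse)
qed

lemma transp_P: "transp_chain cs \<circ> P a = P a \<circ> transp_chain (map (\<lambda>c. a + inverse c) cs)"
proof (induction cs)
  case Nil thus ?case by simp
next
  case (Cons c cs)
  have "transp_chain (c # cs) \<circ> P a = transpose (Some c) None \<circ> (transp_chain cs \<circ> P a)"
    by (simp add: comp_assoc)
  also have "\<dots> = (transpose (Some c) None \<circ> P a) \<circ> transp_chain (map (\<lambda>c. a + inverse c) cs)"
    by (simp only: Cons.IH comp_assoc)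
  also have "\<dots> = P a \<circ> transp_chain (map (\<lambda>c. a + inverse c) (c # cs))"
    by (simp add: tau_P comp_assoc)
  finally show ?case .
qed

fun beta :: "'a::field list \<Rightarrow> 'a list" where
  "beta [] = []"
| "beta (a # as) = a # map (\<lambda>c. a + inverse c) (beta as)"

lemma beta_length: "length (beta as) = length as"
  by (induction as) auto

lemma beta_inj: "beta as = beta bs \<Longrightarrow> as = bs"
proof (induction as arbitrary: bs)
  case Nil thus ?case by (cases bs) auto
next
  case (Cons a as)
  then obtain b bs' where bs: "bs = b # bs'" by (cases bs) auto
  with Cons.prems have ab: "a = b" and m: "map (\<lambda>c. a + inverse c) (beta as) = map (\<lambda>c. a + inverse c) (beta bs')"
    by auto
  have "inj (\<lambda>c. a + inverse c)" by (rule injI) simp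
  hence "beta as = beta bs'" using m by (simp add: inj_map_eq_map)
  thus ?case using Cons.IH ab bs by simp
qed

lemma beta_surj: "\<exists>as. beta as = bs"
proof (induction "length bs" arbitrary: bs)
  case 0 thus ?case by (intro exI[of _ "[]"]) simp
next
  case (Suc n)
  then obtain b bs' where bs: "bs = b # bs'" by (cases bs) auto
  with Suc.hyps(2) have "n = length (map (\<lambda>y. inverse (y - b)) bs')" by simp
  then obtain as where as: "beta as = map (\<lambda>y. inverse (y - b)) bs'"
    using Suc.hyps by blast
  have "beta (b # as) = bs"
    by (simp add: as bs comp_def)
  thus ?case by blast
qed

lemma chain_decomp:
  assumes "CARD('a::{field,finite}) > 2"
  shows "\<exists>M. ismob M \<and> inv_chain (as :: 'a list) = M \<circ> transp_chain (beta as)"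
proof (induction as)
  case Nil thus ?case using ismob_id by fastforce
next
  case (Cons a as)
  then obtain M where M: "ismob M" "inv_chain as = M \<circ> transp_chain (beta as)" by blast
  have "inv_chain (a # as) = M \<circ> (transp_chain (beta as) \<circ> P a)"
    by (simp add: M(2) powinv_shift[OF assms] comp_assoc)
  also have "\<dots> = M \<circ> (P a \<circ> transp_chain (map (\<lambda>c. a + inverse c) (beta as)))"
    by (simp only: transp_P)
  also have "\<dots> = (M \<circ> mob_act 0 1 1 (-a)) \<circ> transp_chain (beta (a # as))"
    by (simp only: P_mob comp_assoc beta.simps transp_chain.simps)
  finally have "inv_chain (a # as) = (M \<circ> mob_act 0 1 1 (-a)) \<circ> transp_chain (beta (a # as))" .
  moreover have "ismob (M \<circ> mob_act 0 1 1 (-a))"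
    by (rule ismob_comp[OF M(1)]) (unfold ismob_def, rule exI[of _ 0], rule exI[of _ 1], rule exI[of _ 1], rule exI[of _ "-a"], simp)
  ultimately show ?case by blast
qed



lemma act_ismob: "\<mu> \<in> deg1_ratfuns \<Longrightarrow> ismob (ratfun_act \<mu>)"
  unfolding deg1_ratfuns_def ismob_def using ratfun_act_Fract by fastforce

lemma exists_rat: "ismob g \<Longrightarrow> \<exists>\<nu>. \<nu> \<in> deg1_ratfuns \<and> ratfun_act \<nu> = g"
  unfolding deg1_ratfuns_def ismob_def using ratfun_act_Fract by fastforce

lemma rat_inj:
  assumes "CARD('a::{field,finite}) > 2" "\<mu> \<in> deg1_ratfuns" "\<nu> \<in> (deg1_ratfuns :: 'a poly fract set)"
    "ratfun_act \<mu> = ratfun_act \<nu>"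
  shows "\<mu> = \<nu>"
proof -
  obtain a b c d where m: "a*d - b*c \<noteq> 0" "\<mu> = Fract [:b,a:] [:d,c:]"
    using assms(2) unfolding deg1_ratfuns_def by blast
  obtain a' b' c' d' where n: "a'*d' - b'*c' \<noteq> 0" "\<nu> = Fract [:b',a':] [:d',c':]"
    using assms(3) unfolding deg1_ratfuns_def by blast
  have "mob_act a b c d = mob_act a' b' c' d'"
    using assms(4) m n ratfun_act_Fract by metis
  from mob_inj[OF assms(1) m(1) n(1) this] show ?thesis using m n by simp
qed

lemma deg1_poly_form:
  assumes "degree p = 1"
  shows "p = [:coeff p 0, coeff p 1:]" "coeff p 1 \<noteq> 0"
proof -
  show "p = [:coeff p 0, coeff p 1:]"
  proof (rule poly_eqI)
    fix n show "coeff p n = coeff [:coeff p 0, coeff p 1:] n"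
    proof (cases n)
      case 0 thus ?thesis by simp
    next
      case (Suc m) thus ?thesis using assms by (cases m) (auto simp: coeff_eq_0)
    qed
  qed
  show "coeff p 1 \<noteq> 0" using assms
    by (metis leading_coeff_0_iff one_neq_zero degree_0)
qed

lemma polys_sub: "deg1_polys \<subseteq> deg1_ratfuns"
proof
  fix \<mu> :: "'a poly fract" assume "\<mu> \<in> deg1_polys"
  then obtain p where p: "degree p = 1" "\<mu> = Fract p 1" unfolding deg1_polys_def by blast
  have "\<mu> = Fract [:coeff p 0, coeff p 1:] [:1, 0:]"
    using p deg1_poly_form(1)[OF p(1)] by (simp add: one_pCons)
  moreover have "coeff p 1 * 1 - coeff p 0 * 0 \<noteq> 0" using deg1_poly_form(2)[OF p(1)] by simp
  ultimately show "\<mu> \<in> deg1_ratfuns" unfolding deg1_ratfuns_def by blast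
qed

lemma part1:
  assumes "\<mu> \<in> deg1_ratfuns" "map_option f = ratfun_act \<mu> \<circ> inv_chain as"
  shows "\<mu> \<in> deg1_polys"
proof -
  obtain a b c d where m: "a*d - b*c \<noteq> 0" "\<mu> = Fract [:b,a:] [:d,c:]"
    using assms(1) unfolding deg1_ratfuns_def by blast
  have "None = mob_act a b c d None"
    using fun_cong[OF assms(2), of None] ratfun_act_Fract[OF m(1)] m(2) by (simp add: inv_chain_None)
  hence c0: "c = 0" by (simp add: mob_act_def split: if_splits)
  with m(1) have ad: "a \<noteq> 0" "d \<noteq> 0" by auto
  have "\<mu> = Fract [:b/d, a/d:] 1"
    using m(2) c0 ad by (simp add: eq_fract)
  moreover have "degree [:b/d, a/d:] = 1" using ad by simp
  ultimately show ?thesis unfolding deg1_polys_def by blast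
qed



theorem corollary4p1:
  fixes f :: "'a::{field,finite} \<Rightarrow> 'a" and k :: nat
  assumes "CARD('a) > 2" and "bij f" and "k \<ge> 1"
  shows "(\<forall>\<mu> as. \<mu> \<in> deg1_ratfuns \<and> length as = k \<and>
            map_option f = ratfun_act \<mu> \<circ> inv_chain as \<longrightarrow> \<mu> \<in> deg1_polys)
       \<and> (\<exists>\<phi>. bij_betw \<phi> (reps_inv f k) (reps_transp f k))"
proof
  show "\<forall>\<mu> as. \<mu> \<in> deg1_ratfuns \<and> length as = k \<and>
            map_option f = ratfun_act \<mu> \<circ> inv_chain as \<longrightarrow> \<mu> \<in> deg1_polys"
    using part1 by blast
next
  define Mof :: "'a list \<Rightarrow> 'a option \<Rightarrow> 'a option" where
    "Mof as = (SOME M. ismob M \<and> inv_chain as = M \<circ> transp_chain (beta as))" for as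
  have Mof: "ismob (Mof as) \<and> inv_chain as = Mof as \<circ> transp_chain (beta as)" for as
    unfolding Mof_def using someI_ex[OF chain_decomp[OF assms(1)]] by blast
  define Minv :: "'a list \<Rightarrow> 'a option \<Rightarrow> 'a option" where
    "Minv as = (SOME h. ismob h \<and> h \<circ> Mof as = id \<and> Mof as \<circ> h = id)" for as
  have Minv: "ismob (Minv as) \<and> Minv as \<circ> Mof as = id \<and> Mof as \<circ> Minv as = id" for as
    unfolding Minv_def using someI_ex[OF ismob_inv[OF conjunct1[OF Mof]]] by blast
  define inv_rat :: "('a option \<Rightarrow> 'a option) \<Rightarrow> 'a poly fract" where
    "inv_rat g = (SOME \<nu>. \<nu> \<in> deg1_ratfuns \<and> ratfun_act \<nu> = g)" for g
  have inv_rat: "inv_rat g \<in> deg1_ratfuns \<and> ratfun_act (inv_rat g) = g" if "ismob g" for g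
    unfolding inv_rat_def using someI_ex[OF exists_rat[OF that]] by blast
  have inv_rat_eq: "inv_rat (ratfun_act \<mu>) = \<mu>" if "\<mu> \<in> deg1_ratfuns" for \<mu>
    using inv_rat[OF act_ismob[OF that]] rat_inj[OF assms(1) _ that] by blast
  have binj: "inj (beta :: 'a list \<Rightarrow> 'a list)" using beta_inj by (auto intro: injI)
  have bsurj: "surj (beta :: 'a list \<Rightarrow> 'a list)" using beta_surj by (metis surjI)
  define \<Phi> where "\<Phi> = (\<lambda>(\<mu>, as). (inv_rat (ratfun_act \<mu> \<circ> Mof as), beta as))"
  define \<Psi> where "\<Psi> = (\<lambda>(\<nu>, bs). (inv_rat (ratfun_act \<nu> \<circ> Minv (inv beta bs)), inv beta bs))"
  have RI: "reps_inv f k = {(\<mu>, as). \<mu> \<in> deg1_ratfuns \<and> length as = k \<and>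
       map_option f = ratfun_act \<mu> \<circ> inv_chain as}"
    unfolding reps_inv_def using polys_sub part1 by blast
  have "bij_betw \<Phi> (reps_inv f k) (reps_transp f k)"
  proof (rule bij_betw_byWitness[where f'=\<Psi>])
    show "\<forall>x\<in>reps_inv f k. \<Psi> (\<Phi> x) = x"
    proof
      fix x assume "x \<in> reps_inv f k"
      then obtain \<mu> as where x: "x = (\<mu>, as)" "\<mu> \<in> deg1_ratfuns" unfolding RI by blast
      have g: "ismob (ratfun_act \<mu> \<circ> Mof as)" using act_ismob[OF x(2)] Mof ismob_comp by blast
      have "ratfun_act (inv_rat (ratfun_act \<mu> \<circ> Mof as)) \<circ> Minv as = ratfun_act \<mu>"
        using inv_rat[OF g] Minv[of as] by (simp add: comp_assoc)
      thus "\<Psi> (\<Phi> x) = x"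
        unfolding \<Phi>_def \<Psi>_def x(1) using inv_f_f[OF binj] inv_rat_eq[OF x(2)] by simp
    qed
    show "\<forall>y\<in>reps_transp f k. \<Phi> (\<Psi> y) = y"
    proof
      fix y assume "y \<in> reps_transp f k"
      then obtain \<nu> bs where y: "y = (\<nu>, bs)" "\<nu> \<in> deg1_ratfuns" unfolding reps_transp_def by blast
      let ?as = "inv beta bs"
      have g: "ismob (ratfun_act \<nu> \<circ> Minv ?as)" using act_ismob[OF y(2)] Minv ismob_comp by blast
      have "ratfun_act (inv_rat (ratfun_act \<nu> \<circ> Minv ?as)) \<circ> Mof ?as = ratfun_act \<nu>"
        using inv_rat[OF g] Minv[of ?as] by (simp add: comp_assoc)
      thus "\<Phi> (\<Psi> y) = y"
        unfolding \<Phi>_def \<Psi>_def y(1) using surj_f_inv_f[OF bsurj] inv_rat_eq[OF y(2)] by simp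
    qed
    show "\<Phi> ` reps_inv f k \<subseteq> reps_transp f k"
    proof
      fix z assume "z \<in> \<Phi> ` reps_inv f k"
      then obtain \<mu> as where x: "z = \<Phi> (\<mu>, as)" "\<mu> \<in> deg1_ratfuns" "length as = k"
        "map_option f = ratfun_act \<mu> \<circ> inv_chain as" unfolding RI by blast
      have g: "ismob (ratfun_act \<mu> \<circ> Mof as)" using act_ismob[OF x(2)] Mof ismob_comp by blast
      have "map_option f = ratfun_act (inv_rat (ratfun_act \<mu> \<circ> Mof as)) \<circ> transp_chain (beta as)"
        using x(4) Mof[of as] inv_rat[OF g] by (simp add: comp_assoc)
      thus "z \<in> reps_transp f k"
        unfolding reps_transp_def x(1) \<Phi>_def using inv_rat[OF g] x(3) beta_length by auto
    qed
    show "\<Psi> ` reps_transp f k \<subseteq> reps_inv f k"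
    proof
      fix z assume "z \<in> \<Psi> ` reps_transp f k"
      then obtain \<nu> bs where y: "z = \<Psi> (\<nu>, bs)" "\<nu> \<in> deg1_ratfuns" "length bs = k"
        "map_option f = ratfun_act \<nu> \<circ> transp_chain bs" unfolding reps_transp_def by blast
      let ?as = "inv beta bs"
      have b: "beta ?as = bs" using surj_f_inv_f[OF bsurj] .
      have g: "ismob (ratfun_act \<nu> \<circ> Minv ?as)" using act_ismob[OF y(2)] Minv ismob_comp by blast
      have "ratfun_act (inv_rat (ratfun_act \<nu> \<circ> Minv ?as)) \<circ> inv_chain ?as
          = ratfun_act \<nu> \<circ> (Minv ?as \<circ> Mof ?as) \<circ> transp_chain bs"
        using inv_rat[OF g] Mof[of ?as] b by (simp add: comp_assoc)
      also have "\<dots> = map_option f" using Minv[of ?as] y(4) by simp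
      finally have e: "map_option f = ratfun_act (inv_rat (ratfun_act \<nu> \<circ> Minv ?as)) \<circ> inv_chain ?as" ..
      have l: "length ?as = k" using b y(3) beta_length by metis
      show "z \<in> reps_inv f k"
        unfolding RI y(1) \<Psi>_def using inv_rat[OF g] e l by auto
    qed
  qed
  thus "\<exists>\<phi>. bij_betw \<phi> (reps_inv f k) (reps_transp f k)" by blast
qed

end
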